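(* Let $A\in\mathcal A_n$. Then $\tau(A)$ is naturally labeled.
   Context: $\mathcal A_n$ is the set of ordered products $A=A_1\times\cdots\times A_k$ of connected linear Nakayama algebras (over an algebraically closed field) with $n$ simple modules in total; its Kupisch series $[c_0,\dots,c_{n-1}]$ is the concatenation of those of the factors, where a connected linear Nakayama algebra with $m$ simple modules has Kupisch series $[c_0,\dots,c_{m-1}]$, $c_i=\dim e_iA$, characterized by $c_{i+1}+1\ge c_i\ge2$ for $0\le i<m-1$ and $c_{m-1}=1$. $\tau(A)$ is the tree on $\{0,\dots,n\}$, rooted at $n$, in which the parent of $i$ is $i+c_i$ for $0\le i<n$. A rooted tree with vertex set $\{0,\dots,n\}$ is naturally labeled if labels increase towards the root and, for each $i$, all children of $i$ have labels smaller than all children of $i+1$. *)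

theory Defs
  imports Main
begin

text \<open>Kupisch series of a connected linear Nakayama algebra with m simple modules:
  a list [c_0,...,c_{m-1}] with m \<ge> 1, c_{m-1} = 1 and c_{i+1}+1 \<ge> c_i \<ge> 2 for i < m-1.\<close>
definition connected_linear_kupisch :: "nat list \<Rightarrow> bool" where
  "connected_linear_kupisch c \<longleftrightarrow>
     c \<noteq> [] \<and> c ! (length c - 1) = 1 \<and>
     (\<forall>i. i + 1 < length c \<longrightarrow> c ! (Suc i) + 1 \<ge> c ! i \<and> c ! i \<ge> 2)"

definition kupisch_of_product :: "nat list list \<Rightarrow> nat list" where
  "kupisch_of_product ks = concat ks"

text \<open>The class A_n, represented by Kupisch series (which determine the algebras up to isomorphism).\<close>
definition A_class :: "nat \<Rightarrow> nat list set" where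
  "A_class n = {kupisch_of_product ks | ks.
      (\<forall>k\<in>set ks. connected_linear_kupisch k) \<and> length (kupisch_of_product ks) = n}"

text \<open>The tree tau(A) on {0..n}, rooted at n, given by its parent function: parent(i) = i + c_i.\<close>
definition tau_parent :: "nat list \<Rightarrow> nat \<Rightarrow> nat" where
  "tau_parent c i = i + c ! i"

text \<open>A rooted tree on {0..n} with root n, given by a parent map p on {0..<n}, is naturally labeled
  if labels increase towards the root and all children of i are smaller than all children of i+1.
  The condition  i < p i \<le> n  for all i < n also guarantees p defines a tree rooted at n.\<close>
definition naturally_labeled :: "nat \<Rightarrow> (nat \<Rightarrow> nat) \<Rightarrow> bool" where
  "naturally_labeled n p \<longleftrightarrow>
     (\<forall>i<n. i < p i \<and> p i \<le> n) \<and>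
     (\<forall>i<n. \<forall>a<n. \<forall>b<n. p a = i \<and> p b = Suc i \<longrightarrow> a < b)"

end

theory Submission
  imports Defs
begin

definition Q :: "nat list \<Rightarrow> bool" where
  "Q c \<longleftrightarrow> (\<forall>i<length c. c!i \<ge> 1) \<and> (\<forall>i. i+1 < length c \<longrightarrow> c!i \<le> c!(Suc i)+1)
     \<and> (c \<noteq> [] \<longrightarrow> last c = 1)"

lemma Q_nil: "Q []" by (simp add: Q_def)

lemma Q_conn: "connected_linear_kupisch c \<Longrightarrow> Q c"
  unfolding Q_def connected_linear_kupisch_def
proof (intro conjI allI impI)
  fix i assume h: "c \<noteq> [] \<and> c ! (length c - 1) = 1 \<and>
     (\<forall>i. i + 1 < length c \<longrightarrow> c ! (Suc i) + 1 \<ge> c ! i \<and> c ! i \<ge> 2)"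
  { assume "i < length c" then show "1 \<le> c!i" using h
      by (metis One_nat_def Suc_eq_plus1 Suc_le_eq add_diff_inverse_nat le_less_trans
          less_diff_conv less_imp_le_nat linorder_neqE_nat nat_less_le numeral_2_eq_2 order_refl) }
  { assume "i+1 < length c" then show "c!i \<le> c!(Suc i)+1" using h by blast }
  { show "last c = 1" using h by (simp add: last_conv_nth) }
qed

lemma Q_app: assumes "Q a" "Q b" shows "Q (a @ b)"
  unfolding Q_def
proof (intro conjI allI impI)
  fix i
  { assume "i < length (a@b)" then show "1 \<le> (a@b)!i" using assms
      by (auto simp: Q_def nth_append) }
  { assume i: "i+1 < length (a@b)"
    show "(a@b)!i \<le> (a@b)!(Suc i)+1"
    proof (cases "i+1 < length a")
      case True then show ?thesis using assms by (auto simp: Q_def nth_append)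
    next
      case F: False
      show ?thesis
      proof (cases "i+1 = length a")
        case True
        then have "a \<noteq> []" by auto
        moreover have "i = length a - 1" using True by simp
        ultimately have "a!i = 1" using assms by (simp add: Q_def last_conv_nth)
        then show ?thesis using True by (simp add: nth_append)
      next
        case False
        then have "i \<ge> length a" using F by auto
        then show ?thesis using assms i
          by (auto simp: Q_def nth_append Suc_diff_le)
      qed
    qed }
  { assume "a @ b \<noteq> []" then show "last (a@b) = 1" using assms
      by (cases "b = []") (auto simp: Q_def) }
qed

lemma Q_concat: "\<forall>k\<in>set ks. Q k \<Longrightarrow> Q (concat ks)"
  by (induction ks) (auto simp: Q_nil Q_app)

lemma Q_mono: assumes "Q c" "i + d < length c" shows "i + c!i \<le> (i+d) + c!(i+d)"
  using assms(2)
proof (induction d)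
  case 0 then show ?case by simp
next
  case (Suc d)
  then have "i + c!i \<le> (i+d) + c!(i+d)" by simp
  moreover have "c!(i+d) \<le> c!(Suc (i+d)) + 1" using assms(1) Suc.prems by (simp add: Q_def)
  ultimately show ?case by simp
qed

lemma Q_bound: assumes "Q c" "i < length c" shows "i + c!i \<le> length c"
proof -
  have "i + (length c - 1 - i) < length c" using assms(2) by simp
  from Q_mono[OF assms(1) this] have "i + c!i \<le> (length c - 1) + c!(length c - 1)"
    using assms(2) by simp
  moreover have "c!(length c - 1) = 1" using assms by (auto simp: Q_def last_conv_nth)
  ultimately show ?thesis using assms(2) by simp
qed

theorem lemma3p5:
  fixes n :: nat and c :: "nat list"
  assumes "c \<in> A_class n"
  shows "naturally_labeled n (tau_parent c)"
proof -
  obtain ks where ks: "c = concat ks" "\<forall>k\<in>set ks. connected_linear_kupisch k" "length c = n"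
    using assms by (auto simp: A_class_def kupisch_of_product_def)
  have Q: "Q c" using ks Q_concat Q_conn by blast
  have mono: "tau_parent c a \<le> tau_parent c b" if "a \<le> b" "b < n" for a b
    using Q_mono[OF Q, of a "b-a"] that ks(3) by (simp add: tau_parent_def)
  show ?thesis unfolding naturally_labeled_def
  proof (intro conjI allI impI)
    fix i assume "i < n"
    then show "i < tau_parent c i" using Q ks(3) by (auto simp: Q_def tau_parent_def)
    show "tau_parent c i \<le> n" using Q_bound[OF Q] \<open>i<n\<close> ks(3) by (simp add: tau_parent_def)
  next
    fix i a b assume "a < n" "b < n" "tau_parent c a = i \<and> tau_parent c b = Suc i"
    then show "a < b" using mono[of b a] by (metis Suc_n_not_le_n not_less)
  qed
qed

end
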